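(* Let $N\in\mathbf{N}$, $\varepsilon=2^{-N}$, $\Lambda_\varepsilon=\varepsilon\mathbf{Z}$, and let $\varphi,\psi$ and $\varphi^{N,n}_x,\psi^{N,m}_x$ be as described in the context. Then for every integer $n\in[0,N)$ the set $$\{\varphi^{N,n}_x:x\in\Lambda_n\}\cup\{\psi^{N,m}_x:m\in[n,N)\cap\mathbf{N},\,x\in\Lambda_m\}$$ (restricted to $\Lambda_\varepsilon$) forms an orthonormal basis of $\ell^2(\Lambda_\varepsilon)$ equipped with the inner product $\langle f,g\rangle_\varepsilon=\varepsilon\sum_{y\in\Lambda_\varepsilon}f(y)g(y)$.
   Context: For $n\in\mathbf{N}$ let $\Lambda_n=\{2^{-n}k:k\in\mathbf{Z}\}$. Let $\varphi\in\mathcal{C}^r(\mathbf{R})$ ($r>0$) be a compactly supported (Daubechies) scaling function: $\int\varphi=1$, $\int\varphi(x)\varphi(x+k)dx=\delta_{0,k}$ for $k\in\mathbf{Z}$, and with $\varphi^n_x(\cdot)=2^{n/2}\varphi(2^n(\cdot-x))$ ($x\in\Lambda_n$) there are a finite set $\mathcal{K}\subset\Lambda_1$ and constants $a_k$ with $\varphi^n_x=\sum_{k\in\mathcal{K}}a_k\varphi^{n+1}_{x+2^{-n}k}$. Let $V_n=\overline{\mathrm{span}}\{\varphi^n_x:x\in\Lambda_n\}\subset L^2(\mathbf{R})$ (so $\{\varphi^n_x\}$ is an orthonormal basis of $V_n$ and $V_n\subset V_{n+1}$), and let $\psi\in\mathcal{C}^r(\mathbf{R})$ be the associated compactly supported wavelet,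 so that $\{\psi^n_x:x\in\Lambda_n\}$, $\psi^n_x=2^{n/2}\psi(2^n(\cdot-x))$, is an orthonormal basis of the orthogonal complement of $V_n$ in $V_{n+1}$, with $\psi^n_x=\sum_{k\in\mathcal{K}}b_k\varphi^{n+1}_{x+2^{-n}k}$ for constants $b_k$. For integers $0\le n\le N$ define the functions $\varphi^{N,n}_x(y)=2^{N/2}\langle\varphi^N_y,\varphi^n_x\rangle_{L^2(\mathbf{R})}$ and, for $n<N$, $\psi^{N,n}_x(y)=2^{N/2}\langle\varphi^N_y,\psi^n_x\rangle_{L^2(\mathbf{R})}$, $x\in\Lambda_n$, $y\in\mathbf{R}$. *)

theory Defs
  imports "HOL-Analysis.Analysis"
begin

definition Lam :: "nat \<Rightarrow> real set" where
  "Lam n = {of_int k / 2 ^ n | k :: int. True}"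

definition Cr :: "real \<Rightarrow> (real \<Rightarrow> real) \<Rightarrow> bool" where
  "Cr r f \<longleftrightarrow> (let k = nat (\<lceil>r\<rceil> - 1) in
      (\<forall>j<k. \<forall>x. ((deriv ^^ j) f) differentiable (at x)) \<and>
      (\<forall>a b. \<exists>C. \<forall>x\<in>{a..b}. \<forall>y\<in>{a..b}.
          \<bar>(deriv ^^ k) f x - (deriv ^^ k) f y\<bar> \<le> C * \<bar>x - y\<bar> powr (r - real k)))"

definition scl :: "(real \<Rightarrow> real) \<Rightarrow> nat \<Rightarrow> real \<Rightarrow> real \<Rightarrow> real" where
  "scl f n x = (\<lambda>y. 2 powr (real n / 2) * f (2 ^ n * (y - x)))"

definition L2ip :: "(real \<Rightarrow> real) \<Rightarrow> (real \<Rightarrow> real) \<Rightarrow> real" where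
  "L2ip f g = (\<integral>y. f y * g y \<partial>lborel)"

definition sq_int :: "(real \<Rightarrow> real) \<Rightarrow> bool" where
  "sq_int f \<longleftrightarrow> f \<in> borel_measurable lborel \<and> integrable lborel (\<lambda>y. (f y)\<^sup>2)"

definition fin_span :: "(real \<Rightarrow> real) \<Rightarrow> nat \<Rightarrow> (real \<Rightarrow> real) set" where
  "fin_span \<phi> n = {(\<lambda>y. \<Sum>x\<in>S. c x * scl \<phi> n x y) | S c. finite S \<and> S \<subseteq> Lam n}"

definition Vsp :: "(real \<Rightarrow> real) \<Rightarrow> nat \<Rightarrow> (real \<Rightarrow> real) set" where
  "Vsp \<phi> n = {f. sq_int f \<and> (\<exists>g. (\<forall>j. g j \<in> fin_span \<phi> n) \<and>
      (\<lambda>j. \<integral>y. (f y - g j y)\<^sup>2 \<partial>lborel) \<longlonglongrightarrow> 0)}"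

text \<open>phi^{N,n}_x(y) = 2^{N/2} <phi^N_y, phi^n_x> and psi^{N,n}_x(y) = 2^{N/2} <phi^N_y, psi^n_x>.\<close>
definition coarse :: "(real \<Rightarrow> real) \<Rightarrow> (real \<Rightarrow> real) \<Rightarrow> nat \<Rightarrow> nat \<Rightarrow> real \<Rightarrow> real \<Rightarrow> real" where
  "coarse \<phi> g N n x y = 2 powr (real N / 2) * L2ip (scl \<phi> N y) (scl g n x)"

definition ip_eps :: "nat \<Rightarrow> (real \<Rightarrow> real) \<Rightarrow> (real \<Rightarrow> real) \<Rightarrow> real" where
  "ip_eps N f g = (1 / 2 ^ N) * (\<Sum>\<^sub>\<infinity>y\<in>Lam N. f y * g y)"

definition in_l2 :: "nat \<Rightarrow> (real \<Rightarrow> real) \<Rightarrow> bool" where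
  "in_l2 N f \<longleftrightarrow> (\<lambda>y. (f y)\<^sup>2) summable_on Lam N"

definition is_ONB_l2 :: "nat \<Rightarrow> 'i set \<Rightarrow> ('i \<Rightarrow> real \<Rightarrow> real) \<Rightarrow> bool" where
  "is_ONB_l2 N I e \<longleftrightarrow>
     (\<forall>i\<in>I. in_l2 N (e i)) \<and>
     (\<forall>i\<in>I. \<forall>j\<in>I. ip_eps N (e i) (e j) = (if i = j then 1 else 0)) \<and>
     (\<forall>f. in_l2 N f \<and> (\<forall>i\<in>I. ip_eps N f (e i) = 0) \<longrightarrow> (\<forall>y\<in>Lam N. f y = 0))"

end

theory Submission
  imports Defs
begin


definition good :: "(real \<Rightarrow> real) \<Rightarrow> bool" where
  "good f \<longleftrightarrow> continuous_on UNIV f \<and> bounded {t. f t \<noteq> 0}"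

lemma bounded_supp_R:
  assumes "bounded {t. (f::real\<Rightarrow>real) t \<noteq> 0}"
  obtains R where "R > 0" "\<And>t. f t \<noteq> 0 \<Longrightarrow> \<bar>t\<bar> \<le> R"
proof -
  obtain a where a: "\<forall>x\<in>{t. f t \<noteq> 0}. norm x \<le> a" using assms bounded_iff by blast
  show ?thesis using that[of "max a 1"] a by force
qed

lemma good_integrable:
  assumes "good f" "good g"
  shows "integrable lborel (\<lambda>t. f t * g t)"
proof -
  obtain R where R: "R > 0" "\<And>t. f t \<noteq> 0 \<Longrightarrow> \<bar>t\<bar> \<le> R"
    using assms(1) unfolding good_def by (metis bounded_supp_R)
  have c: "continuous_on (cball 0 R) (\<lambda>t. f t * g t)"
    using assms unfolding good_def
    by (intro continuous_intros) (auto intro: continuous_on_subset)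
  have "integrable lborel (\<lambda>t. indicator (cball 0 R) t *\<^sub>R (f t * g t))"
    by (rule borel_integrable_compact[OF compact_cball c])
  moreover have "(\<lambda>t. indicator (cball 0 R) t *\<^sub>R (f t * g t)) = (\<lambda>t. f t * g t)"
  proof
    fix t show "indicator (cball 0 R) t *\<^sub>R (f t * g t) = f t * g t"
      using R(2)[of t] by (cases "f t = 0") (auto simp: indicator_def dist_real_def)
  qed
  ultimately show ?thesis by simp
qed

lemma good_add: "good f \<Longrightarrow> good g \<Longrightarrow> good (\<lambda>t. f t + g t)"
  unfolding good_def
  apply (intro conjI continuous_intros, auto)
  apply (rule bounded_subset[of "{t. f t \<noteq> 0} \<union> {t. g t \<noteq> 0}"])
  by auto

lemma good_cmult: "good f \<Longrightarrow> good (\<lambda>t. c * f t)"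
  unfolding good_def
  apply (intro conjI continuous_intros, auto)
  apply (rule bounded_subset, assumption) by auto

lemma good_diff: "good f \<Longrightarrow> good g \<Longrightarrow> good (\<lambda>t. f t - g t)"
  using good_add[of f "\<lambda>t. (-1) * g t"] good_cmult[of g "-1"] by simp

lemma good_zero: "good (\<lambda>t. 0)"
  unfolding good_def by auto

lemma good_sum: "finite A \<Longrightarrow> (\<And>i. i \<in> A \<Longrightarrow> good (u i)) \<Longrightarrow> good (\<lambda>t. \<Sum>i\<in>A. c i * u i t)"
proof (induction A rule: finite_induct)
  case empty then show ?case by (simp add: good_zero)
next
  case (insert x F)
  then show ?case using good_add[OF good_cmult[of "u x" "c x"], of "\<lambda>t. \<Sum>i\<in>F. c i * u i t"]
    by simp
qed

lemma good_scl: assumes "good f" shows "good (scl f m x)"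
proof -
  obtain R where R: "R > 0" "\<And>t. f t \<noteq> 0 \<Longrightarrow> \<bar>t\<bar> \<le> R"
    using assms unfolding good_def by (metis bounded_supp_R)
  have cf: "continuous_on UNIV f" using assms unfolding good_def by blast
  have "continuous_on UNIV (\<lambda>y. f (2 ^ m * (y - x)))"
    by (rule continuous_on_compose2[OF cf]) (auto intro!: continuous_intros)
  then have "continuous_on UNIV (\<lambda>y. 2 powr (real m / 2) * f (2 ^ m * (y - x)))"
    by (intro continuous_on_mult continuous_on_const)
  moreover have "{y. scl f m x y \<noteq> 0} \<subseteq> cball x R"
  proof
    fix y assume "y \<in> {y. scl f m x y \<noteq> 0}"
    then have "f (2 ^ m * (y - x)) \<noteq> 0" by (simp add: scl_def)
    then have "\<bar>2 ^ m * (y - x)\<bar> \<le> R" using R by blast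
    moreover have "\<bar>y - x\<bar> \<le> \<bar>2 ^ m * (y - x)\<bar>"
      by (simp add: abs_mult mult_le_cancel_right1) 
    ultimately show "y \<in> cball x R" by (simp add: dist_real_def abs_minus_commute)
  qed
  ultimately show ?thesis unfolding good_def scl_def
    using bounded_subset[OF bounded_cball] by auto
qed

lemma L2ip_comm: "L2ip f g = L2ip g f"
  unfolding L2ip_def by (simp add: mult.commute)

lemma L2ip_sum_left:
  assumes "finite A" "\<And>i. i \<in> A \<Longrightarrow> good (u i)" "good g"
  shows "L2ip (\<lambda>t. \<Sum>i\<in>A. c i * u i t) g = (\<Sum>i\<in>A. c i * L2ip (u i) g)"
proof -
  have "L2ip (\<lambda>t. \<Sum>i\<in>A. c i * u i t) g = (\<integral>t. (\<Sum>i\<in>A. c i * (u i t * g t)) \<partial>lborel)"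
    unfolding L2ip_def by (simp add: sum_distrib_right mult.assoc)
  also have "\<dots> = (\<Sum>i\<in>A. (\<integral>t. c i * (u i t * g t) \<partial>lborel))"
    using assms good_integrable by (intro Bochner_Integration.integral_sum) (auto intro!: integrable_mult_right)
  also have "\<dots> = (\<Sum>i\<in>A. c i * L2ip (u i) g)"
    unfolding L2ip_def by simp
  finally show ?thesis .
qed

lemma L2ip_diff_left:
  assumes "good f1" "good f2" "good g"
  shows "L2ip (\<lambda>t. f1 t - f2 t) g = L2ip f1 g - L2ip f2 g"
  unfolding L2ip_def using good_integrable[OF assms(1,3)] good_integrable[OF assms(2,3)]
  by (simp add: left_diff_distrib)

lemma L2ip_add_left:
  assumes "good f1" "good f2" "good g"
  shows "L2ip (\<lambda>t. f1 t + f2 t) g = L2ip f1 g + L2ip f2 g"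
  unfolding L2ip_def using good_integrable[OF assms(1,3)] good_integrable[OF assms(2,3)]
  by (simp add: distrib_right)




lemma Lam_iff: "x \<in> Lam m \<longleftrightarrow> (\<exists>k::int. x = of_int k / 2 ^ m)"
  unfolding Lam_def by auto

lemma Lam_mono: assumes "m \<le> m'" shows "Lam m \<subseteq> Lam m'"
proof
  fix x assume "x \<in> Lam m"
  then obtain k where k: "x = of_int k / 2 ^ m" by (auto simp: Lam_iff)
  have "(2::real) ^ m' = 2 ^ m * 2 ^ (m' - m)" using assms by (simp add: power_add[symmetric])
  then have "x = of_int (k * 2 ^ (m' - m)) / 2 ^ m'" using k by simp
  then show "x \<in> Lam m'" unfolding Lam_iff by blast
qed

lemma Lam_add: assumes "x \<in> Lam m" "k \<in> Lam 1" shows "x + k / 2 ^ m \<in> Lam (Suc m)"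
proof -
  obtain i where i: "x = of_int i / 2 ^ m" using assms by (auto simp: Lam_iff)
  obtain j where j: "k = of_int j / 2" using assms by (auto simp: Lam_iff)
  have "x + k / 2 ^ m = of_int (2 * i + j) / 2 ^ Suc m" using i j by (simp add: field_simps)
  then show ?thesis unfolding Lam_iff by blast
qed

lemma Lam_diff: assumes "x \<in> Lam m" "x' \<in> Lam m"
  obtains k :: int where "2 ^ m * (x - x') = of_int k" "x = x' \<longleftrightarrow> k = 0"
proof -
  obtain i where i: "x = of_int i / 2 ^ m" using assms by (auto simp: Lam_iff)
  obtain j where j: "x' = of_int j / 2 ^ m" using assms by (auto simp: Lam_iff)
  show ?thesis using that[of "i - j"] i j by (auto simp: field_simps)
qed

lemma Lam_finite: "finite {x \<in> Lam m. \<bar>x\<bar> \<le> A}"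
proof -
  let ?c = "\<lceil>A * 2 ^ m\<rceil>"
  have "{x \<in> Lam m. \<bar>x\<bar> \<le> A} \<subseteq> (\<lambda>k. of_int k / 2 ^ m) ` {-?c..?c}"
  proof
    fix x assume "x \<in> {x \<in> Lam m. \<bar>x\<bar> \<le> A}"
    then obtain k where k: "x = of_int k / 2 ^ m" "\<bar>x\<bar> \<le> A" by (auto simp: Lam_iff)
    have "\<bar>x\<bar> = \<bar>of_int k\<bar> / 2 ^ m" using k(1) by (simp add: abs_divide)
    then have "\<bar>of_int k\<bar> / 2 ^ m \<le> A" using k(2) by simp
    then have "\<bar>real_of_int k\<bar> \<le> A * 2 ^ m" by (simp only: divide_le_eq zero_less_power zero_less_numeral if_True)
    also have "\<dots> \<le> real_of_int ?c" by (rule le_of_int_ceiling)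
    finally have "real_of_int \<bar>k\<bar> \<le> real_of_int ?c" by simp
    then have kc: "\<bar>k\<bar> \<le> ?c" by (simp only: of_int_le_iff)
    show "x \<in> (\<lambda>k. of_int k / 2 ^ m) ` {-?c..?c}"
      by (rule image_eqI[where x=k]) (use k(1) kc in auto)
  qed
  then show ?thesis by (rule finite_subset) auto
qed

lemma fin_span_iff: "h \<in> fin_span f m \<longleftrightarrow>
   (\<exists>S c. finite S \<and> S \<subseteq> Lam m \<and> h = (\<lambda>y. \<Sum>x\<in>S. c x * scl f m x y))"
  unfolding fin_span_def by auto

lemma fin_span_zero: "(\<lambda>y. 0) \<in> fin_span f m"
  unfolding fin_span_iff by (rule exI[of _ "{}"]) auto

lemma fin_span_basis: "x \<in> Lam m \<Longrightarrow> scl f m x \<in> fin_span f m"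
  unfolding fin_span_iff by (rule exI[of _ "{x}"], rule exI[of _ "\<lambda>_. 1"]) auto

lemma fin_span_cmult: "h \<in> fin_span f m \<Longrightarrow> (\<lambda>y. c * h y) \<in> fin_span f m"
  unfolding fin_span_iff
  apply clarify
  subgoal for S d by (rule exI[of _ S], rule exI[of _ "\<lambda>x. c * d x"]) (auto simp: sum_distrib_left mult.assoc)
  done

lemma fin_span_add:
  assumes "h1 \<in> fin_span f m" "h2 \<in> fin_span f m"
  shows "(\<lambda>y. h1 y + h2 y) \<in> fin_span f m"
proof -
  obtain S1 c1 where 1: "finite S1" "S1 \<subseteq> Lam m" "h1 = (\<lambda>y. \<Sum>x\<in>S1. c1 x * scl f m x y)"
    using assms(1) unfolding fin_span_iff by blast
  obtain S2 c2 where 2: "finite S2" "S2 \<subseteq> Lam m" "h2 = (\<lambda>y. \<Sum>x\<in>S2. c2 x * scl f m x y)"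
    using assms(2) unfolding fin_span_iff by blast
  let ?S = "S1 \<union> S2"
  let ?c = "\<lambda>x. (if x \<in> S1 then c1 x else 0) + (if x \<in> S2 then c2 x else 0)"
  have e1: "(\<Sum>x\<in>?S. (if x \<in> S1 then c1 x else 0) * scl f m x y) = (\<Sum>x\<in>S1. c1 x * scl f m x y)" for y
    by (rule sum.mono_neutral_cong_right) (use 1 2 in auto)
  have e2: "(\<Sum>x\<in>?S. (if x \<in> S2 then c2 x else 0) * scl f m x y) = (\<Sum>x\<in>S2. c2 x * scl f m x y)" for y
    by (rule sum.mono_neutral_cong_right) (use 1 2 in auto)
  have eq: "(\<lambda>y. h1 y + h2 y) = (\<lambda>y. \<Sum>x\<in>?S. ?c x * scl f m x y)"
  proof
    fix y
    have "(\<Sum>x\<in>?S. ?c x * scl f m x y) = (\<Sum>x\<in>?S. (if x \<in> S1 then c1 x else 0) * scl f m x y)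
       + (\<Sum>x\<in>?S. (if x \<in> S2 then c2 x else 0) * scl f m x y)"
      unfolding sum.distrib[symmetric] by (rule sum.cong) (simp_all only: distrib_right)
    then show "h1 y + h2 y = (\<Sum>x\<in>?S. ?c x * scl f m x y)" unfolding e1 e2 1(3) 2(3) by simp
  qed
  show ?thesis unfolding fin_span_iff
    by (rule exI[of _ ?S], rule exI[of _ ?c]) (use 1(1,2) 2(1,2) eq in simp)
qed

lemma fin_span_diff:
  assumes "h1 \<in> fin_span f m" "h2 \<in> fin_span f m"
  shows "(\<lambda>y. h1 y - h2 y) \<in> fin_span f m"
  using fin_span_add[OF assms(1) fin_span_cmult[OF assms(2), of "-1"]] by simp

lemma fin_span_sum:
  "finite A \<Longrightarrow> (\<And>i. i \<in> A \<Longrightarrow> u i \<in> fin_span f m) \<Longrightarrow> (\<lambda>y. \<Sum>i\<in>A. c i * u i y) \<in> fin_span f m"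
proof (induction A rule: finite_induct)
  case empty then show ?case by (simp add: fin_span_zero)
next
  case (insert x F)
  then show ?case using fin_span_add[OF fin_span_cmult[of "u x" f m "c x"], of "\<lambda>y. \<Sum>i\<in>F. c i * u i y"]
    by simp
qed

lemma fin_span_good: "good f \<Longrightarrow> h \<in> fin_span f m \<Longrightarrow> good h"
  unfolding fin_span_iff using good_sum good_scl by fastforce

lemma fin_span_step:
  assumes "\<And>x. x \<in> Lam m \<Longrightarrow> scl f m x \<in> fin_span f (Suc m)"
  shows "fin_span f m \<subseteq> fin_span f (Suc m)"
proof
  fix h assume "h \<in> fin_span f m"
  then obtain S c where "finite S" "S \<subseteq> Lam m" "h = (\<lambda>y. \<Sum>x\<in>S. c x * scl f m x y)"
    unfolding fin_span_iff by blast
  then show "h \<in> fin_span f (Suc m)" using assms by (auto intro!: fin_span_sum)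
qed

lemma fin_span_mono:
  assumes "\<And>m x. x \<in> Lam m \<Longrightarrow> scl f m x \<in> fin_span f (Suc m)" "m \<le> m'"
  shows "fin_span f m \<subseteq> fin_span f m'"
  using assms(2)
proof (induction m' rule: dec_induct)
  case base then show ?case by simp
next
  case (step k) then show ?case using fin_span_step[of k f] assms(1) by blast
qed

lemma ON_lemma:
  assumes phi_orth: "\<And>k::int. (\<integral>x. f x * f (x + of_int k) \<partial>lborel) = (if k = 0 then 1 else 0)"
    and "x \<in> Lam m" "x' \<in> Lam m"
  shows "L2ip (scl f m x) (scl f m x') = (if x = x' then 1 else 0)"
proof -
  obtain k where k: "2 ^ m * (x - x') = of_int k" "x = x' \<longleftrightarrow> k = 0"
    using Lam_diff[OF assms(2,3)] by blast
  let ?F = "\<lambda>y. scl f m x y * scl f m x' y"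
  have c: "(1 / 2 ^ m :: real) \<noteq> 0" by simp
  have "L2ip (scl f m x) (scl f m x') = \<bar>1/2^m\<bar> *\<^sub>R (\<integral>s. ?F (x + 1/2^m * s) \<partial>lborel)"
    unfolding L2ip_def by (rule lborel_integral_real_affine[OF c])
  also have "(\<lambda>s. ?F (x + 1/2^m * s)) = (\<lambda>s. 2 ^ m * (f s * f (s + of_int k)))"
  proof
    fix s
    have p: "2 powr (real m / 2) * 2 powr (real m / 2) = (2::real) ^ m"
      by (simp add: powr_add[symmetric] powr_realpow)
    have a: "2 ^ m * (x + 1 / 2 ^ m * s - x') = s + 2 ^ m * (x - x')" by (simp add: field_simps)
    show "?F (x + 1/2^m * s) = 2 ^ m * (f s * f (s + of_int k))"
      unfolding scl_def a k(1)[symmetric] using p by (simp add: field_simps)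
  qed
  also have "\<bar>1/2^m\<bar> *\<^sub>R (\<integral>s. 2 ^ m * (f s * f (s + of_int k)) \<partial>lborel) = (if k = 0 then 1 else 0)"
    using phi_orth[of k] by simp
  finally show ?thesis using k(2) by simp
qed

lemma F3:
  assumes "bounded {t. g t \<noteq> 0}" "good h"
  shows "finite {x \<in> Lam m. L2ip h (scl g m x) \<noteq> 0}"
proof -
  obtain Rg where Rg: "\<And>t. g t \<noteq> 0 \<Longrightarrow> \<bar>t\<bar> \<le> Rg" using assms(1) bounded_supp_R by metis
  obtain Rh where Rh: "\<And>t. h t \<noteq> 0 \<Longrightarrow> \<bar>t\<bar> \<le> Rh"
    using assms(2) bounded_supp_R unfolding good_def by metis
  have "{x \<in> Lam m. L2ip h (scl g m x) \<noteq> 0} \<subseteq> {x \<in> Lam m. \<bar>x\<bar> \<le> Rh + Rg}"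
  proof (clarsimp, rule ccontr)
    fix x assume x: "x \<in> Lam m" "L2ip h (scl g m x) \<noteq> 0" "\<not> \<bar>x\<bar> \<le> Rh + Rg"
    have "(\<lambda>t. h t * scl g m x t) = (\<lambda>t. 0)"
    proof
      fix t show "h t * scl g m x t = 0"
      proof (cases "h t = 0")
        case False
        then have "\<bar>t\<bar> \<le> Rh" using Rh by blast
        then have "\<bar>t - x\<bar> > Rg" using x(3) by linarith
        moreover have "\<bar>t - x\<bar> \<le> \<bar>2 ^ m * (t - x)\<bar>"
          by (simp add: abs_mult mult_le_cancel_right1)
        ultimately have "g (2 ^ m * (t - x)) = 0" using Rg by force
        then show ?thesis by (simp add: scl_def)
      qed simp
    qed
    then have "L2ip h (scl g m x) = 0" unfolding L2ip_def by simp
    then show False using x(2) by simp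
  qed
  then show ?thesis by (rule finite_subset[OF _ Lam_finite])
qed

lemma good_sq_int: assumes "good h" shows "sq_int h"
  unfolding sq_int_def
proof
  show "h \<in> borel_measurable lborel"
    using assms unfolding good_def by (simp add: borel_measurable_continuous_onI)
  show "integrable lborel (\<lambda>y. (h y)\<^sup>2)"
    using good_integrable[OF assms assms] by (simp add: power2_eq_square)
qed

lemma fin_span_Vsp: assumes "good f" "h \<in> fin_span f m" shows "h \<in> Vsp f m"
proof -
  have "sq_int h" using assms fin_span_good good_sq_int by blast
  then show ?thesis unfolding Vsp_def
    by (intro CollectI conjI exI[of _ "\<lambda>j. h"]) (use assms(2) in auto)
qed




lemma Cr_cont:
  assumes "r > 0" "Cr r f"
  shows "continuous_on UNIV f"
proof -
  define k where "k = nat (\<lceil>r\<rceil> - 1)"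
  have d: "\<forall>j<k. \<forall>x. ((deriv ^^ j) f) differentiable (at x)"
    and h: "\<forall>a b. \<exists>C. \<forall>x\<in>{a..b}. \<forall>y\<in>{a..b}.
          \<bar>(deriv ^^ k) f x - (deriv ^^ k) f y\<bar> \<le> C * \<bar>x - y\<bar> powr (r - real k)"
    using assms(2) unfolding Cr_def Let_def k_def by auto
  show ?thesis
  proof (cases "k = 0")
    case False
    then have "\<forall>x. f differentiable (at x)" using d by (metis funpow_0 gr0I)
    then show ?thesis
      by (intro continuous_at_imp_continuous_on) (auto intro: differentiable_imp_continuous_within)
  next
    case True
    have "isCont f x0" for x0
    proof -
      obtain C where C: "\<forall>x\<in>{x0-1..x0+1}. \<forall>y\<in>{x0-1..x0+1}. \<bar>f x - f y\<bar> \<le> C * \<bar>x - y\<bar> powr r"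
        using h[rule_format, of "x0-1" "x0+1"] True by auto
      have key: "norm (f y - f x0) \<le> C * \<bar>y - x0\<bar> powr r" if "dist y x0 < 1" for y
      proof -
        have "y \<in> {x0-1..x0+1}" using that by (auto simp: dist_real_def abs_less_iff)
        moreover have "x0 \<in> {x0-1..x0+1}" by auto
        ultimately show ?thesis using C by simp
      qed
      have ev: "eventually (\<lambda>y. norm (f y - f x0) \<le> C * \<bar>y - x0\<bar> powr r) (at x0)"
        unfolding eventually_at
        by (rule exI[of _ 1]) (use key in auto)
      have "((\<lambda>y. \<bar>y - x0\<bar> powr r) \<longlongrightarrow> 0) (at x0)"
        by (rule tendsto_zero_powrI) (auto intro!: tendsto_eq_intros simp: assms(1))
      then have "((\<lambda>y. C * \<bar>y - x0\<bar> powr r) \<longlongrightarrow> 0) (at x0)"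
        by (rule tendsto_mult_right_zero)
      then have "((\<lambda>y. f y - f x0) \<longlongrightarrow> 0) (at x0)"
        by (rule Lim_null_comparison[OF ev])
      then show ?thesis unfolding isCont_def by (rule LIM_zero_cancel)
    qed
    then show ?thesis by (simp add: continuous_at_imp_continuous_on)
  qed
qed

lemma ab_le: fixes a b s :: real assumes "s > 0"
  shows "\<bar>a * b\<bar> \<le> (s * a\<^sup>2 + b\<^sup>2 / s) / 2"
proof -
  have "0 \<le> (s * \<bar>a\<bar> - \<bar>b\<bar>)\<^sup>2" by simp
  then have "2 * s * \<bar>a * b\<bar> \<le> s * (s * a\<^sup>2) + b\<^sup>2"
    by (simp add: power2_eq_square abs_mult algebra_simps)
  then show ?thesis using assms by (simp add: field_simps)
qed

lemma sq_int_mult_integrable: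
  assumes "sq_int f" "sq_int g"
  shows "integrable lborel (\<lambda>t. f t * g t)"
proof (rule Bochner_Integration.integrable_bound)
  show "integrable lborel (\<lambda>t. ((f t)\<^sup>2 + (g t)\<^sup>2) / 2)"
    using assms unfolding sq_int_def by auto
  show "(\<lambda>t. f t * g t) \<in> borel_measurable lborel" using assms unfolding sq_int_def by auto
  show "AE t in lborel. norm (f t * g t) \<le> norm (((f t)\<^sup>2 + (g t)\<^sup>2) / 2)"
    using ab_le[of 1 "f _" "g _"] by auto
qed

lemma sq_int_diff:
  assumes "sq_int f" "sq_int g"
  shows "sq_int (\<lambda>t. f t - g t)"
  unfolding sq_int_def
proof
  show "(\<lambda>t. f t - g t) \<in> borel_measurable lborel" using assms unfolding sq_int_def by auto
  have "(\<lambda>t. (f t - g t)\<^sup>2) = (\<lambda>t. (f t)\<^sup>2 + (g t)\<^sup>2 - 2 * (f t * g t))"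
    by (simp add: power2_eq_square algebra_simps)
  moreover have "integrable lborel (\<lambda>t. (f t)\<^sup>2 + (g t)\<^sup>2 - 2 * (f t * g t))"
    using assms sq_int_mult_integrable[OF assms] unfolding sq_int_def by auto
  ultimately show "integrable lborel (\<lambda>t. (f t - g t)\<^sup>2)" by simp
qed

lemma CS_weak:
  assumes "sq_int f" "sq_int d" "s > 0"
  shows "\<bar>\<integral>t. f t * d t \<partial>lborel\<bar> \<le> (s * (\<integral>t. (f t)\<^sup>2 \<partial>lborel) + (\<integral>t. (d t)\<^sup>2 \<partial>lborel) / s) / 2"
proof -
  have i1: "integrable lborel (\<lambda>t. (f t)\<^sup>2)" "integrable lborel (\<lambda>t. (d t)\<^sup>2)"
    using assms unfolding sq_int_def by auto
  have "\<bar>\<integral>t. f t * d t \<partial>lborel\<bar> \<le> (\<integral>t. norm (f t * d t) \<partial>lborel)"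
    using integral_norm_bound[of lborel "\<lambda>t. f t * d t"] by simp
  also have "\<dots> \<le> (\<integral>t. (s * (f t)\<^sup>2 + (d t)\<^sup>2 / s) / 2 \<partial>lborel)"
    by (rule integral_mono) (use i1 sq_int_mult_integrable[OF assms(1,2)] ab_le[OF assms(3)] in auto)
  also have "\<dots> = (s * (\<integral>t. (f t)\<^sup>2 \<partial>lborel) + (\<integral>t. (d t)\<^sup>2 \<partial>lborel) / s) / 2"
    using i1 by simp
  finally show ?thesis .
qed

lemma perp_limit:
  assumes "sq_int h" "sq_int g" "\<And>j. sq_int (gs j)" "\<And>j. L2ip h (gs j) = 0"
    and lim: "(\<lambda>j. \<integral>y. (g y - gs j y)\<^sup>2 \<partial>lborel) \<longlonglongrightarrow> 0"
  shows "L2ip h g = 0"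
proof -
  define L where "L = L2ip h g"
  define A where "A = (\<integral>t. (h t)\<^sup>2 \<partial>lborel)"
  have A0: "A \<ge> 0" unfolding A_def by simp
  have bnd: "\<bar>L\<bar> \<le> s * A / 2" if s: "s > 0" for s
  proof -
    have "\<bar>L\<bar> \<le> (s * A + (\<integral>y. (g y - gs j y)\<^sup>2 \<partial>lborel) / s) / 2" for j
    proof -
      have "L2ip h g = L2ip h (\<lambda>t. g t - gs j t) + L2ip h (gs j)"
        unfolding L2ip_def
        using sq_int_mult_integrable[OF assms(1) assms(2)] sq_int_mult_integrable[OF assms(1) assms(3)]
        by (simp add: right_diff_distrib)
      then have "L = L2ip h (\<lambda>t. g t - gs j t)" using assms(4) L_def by simp
      then show ?thesis unfolding L2ip_def A_def
        using CS_weak[OF assms(1) sq_int_diff[OF assms(2) assms(3)] s] by simp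
    qed
    moreover have "(\<lambda>j. (s * A + (\<integral>y. (g y - gs j y)\<^sup>2 \<partial>lborel) / s) / 2) \<longlonglongrightarrow> (s * A + 0 / s) / 2"
      by (intro tendsto_intros lim) (use s in auto)
    ultimately show ?thesis
      by (intro LIMSEQ_le_const[where X="\<lambda>j. (s * A + (\<integral>y. (g y - gs j y)\<^sup>2 \<partial>lborel) / s) / 2"]) auto
  qed
  show ?thesis
  proof (rule ccontr)
    assume "L2ip h g \<noteq> 0"
    then have L: "\<bar>L\<bar> > 0" unfolding L_def by simp
    have "\<bar>L\<bar> \<le> (\<bar>L\<bar> / (A + 1)) * A / 2" using bnd[of "\<bar>L\<bar> / (A + 1)"] L A0 by simp
    moreover have "(\<bar>L\<bar> / (A + 1)) * A / 2 < \<bar>L\<bar>"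
    proof -
      have "\<bar>L\<bar> * A < \<bar>L\<bar> * (2 * (A + 1))" using L A0 by (intro mult_strict_left_mono) auto
      then show ?thesis using A0 by (simp add: field_simps)
    qed
    ultimately show False by simp
  qed
qed

lemma proj:
  assumes "finite A" "A \<subseteq> J" "\<And>i. i \<in> J \<Longrightarrow> good (u i)"
    and ON: "\<And>i j. i \<in> J \<Longrightarrow> j \<in> J \<Longrightarrow> L2ip (u i) (u j) = (if i = j then 1 else 0)"
    and "good h" "j \<in> J" "\<And>i. i \<in> J \<Longrightarrow> i \<notin> A \<Longrightarrow> L2ip h (u i) = 0"
  shows "L2ip (\<lambda>t. h t - (\<Sum>i\<in>A. L2ip h (u i) * u i t)) (u j) = 0"
proof -
  have gA: "\<And>i. i \<in> A \<Longrightarrow> good (u i)" using assms(2,3) by auto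
  have "L2ip (\<lambda>t. h t - (\<Sum>i\<in>A. L2ip h (u i) * u i t)) (u j)
      = L2ip h (u j) - (\<Sum>i\<in>A. L2ip h (u i) * L2ip (u i) (u j))"
    using L2ip_diff_left[OF assms(5) good_sum[OF assms(1) gA] assms(3)[OF assms(6)]]
      L2ip_sum_left[OF assms(1) gA assms(3)[OF assms(6)]] by simp
  also have "(\<Sum>i\<in>A. L2ip h (u i) * L2ip (u i) (u j)) = (\<Sum>i\<in>A. if i = j then L2ip h (u i) else 0)"
    by (rule sum.cong) (use ON assms(2,6) in auto)
  also have "\<dots> = (if j \<in> A then L2ip h (u j) else 0)" using assms(1) by (simp add: sum.delta)
  finally show ?thesis using assms(6,7) by auto
qed

lemma infsum_fin:
  fixes f :: "'a \<Rightarrow> real"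
  assumes "finite F" "F \<subseteq> A" "\<And>x. x \<in> A \<Longrightarrow> x \<notin> F \<Longrightarrow> f x = 0"
  shows "f summable_on A" "infsum f A = sum f F"
proof -
  have "f summable_on A \<longleftrightarrow> f summable_on F"
    by (rule summable_on_cong_neutral) (use assms in auto)
  then show "f summable_on A" using assms(1) by simp
  have "infsum f A = infsum f F"
    by (rule infsum_cong_neutral) (use assms in auto)
  then show "infsum f A = sum f F" using assms(1) by simp
qed




locale wav =
  fixes \<phi> \<psi> :: "real \<Rightarrow> real"
  assumes good_phi: "good \<phi>"
    and ON: "\<And>m x x'. x \<in> Lam m \<Longrightarrow> x' \<in> Lam m \<Longrightarrow>
        L2ip (scl \<phi> m x) (scl \<phi> m x') = (if x = x' then 1 else 0)"
    and phi_step: "\<And>m x. x \<in> Lam m \<Longrightarrow> scl \<phi> m x \<in> fin_span \<phi> (Suc m)"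
    and psi_fs: "\<And>m x. x \<in> Lam m \<Longrightarrow> scl \<psi> m x \<in> fin_span \<phi> (Suc m)"
    and psi_supp: "bounded {x. \<psi> x \<noteq> 0}"
    and psi_orthonormal: "\<And>m x x'. x \<in> Lam m \<Longrightarrow> x' \<in> Lam m \<Longrightarrow>
        L2ip (scl \<psi> m x) (scl \<psi> m x') = (if x = x' then 1 else 0)"
    and psi_perp: "\<And>m x f. x \<in> Lam m \<Longrightarrow> f \<in> Vsp \<phi> m \<Longrightarrow> L2ip f (scl \<psi> m x) = 0"
    and psi_complete: "\<And>m f. f \<in> Vsp \<phi> (Suc m) \<Longrightarrow> (\<forall>g\<in>Vsp \<phi> m. L2ip f g = 0) \<Longrightarrow>
        (\<forall>x\<in>Lam m. L2ip f (scl \<psi> m x) = 0) \<Longrightarrow> L2ip f f = 0"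
begin

lemma gphi: "good (scl \<phi> m x)" by (rule good_scl[OF good_phi])

lemma fs_good: "h \<in> fin_span \<phi> m \<Longrightarrow> good h"
  using fin_span_good[OF good_phi] by blast

lemma gpsi: "x \<in> Lam m \<Longrightarrow> good (scl \<psi> m x)"
  using fs_good psi_fs by blast

lemma fs_mono: "m \<le> m' \<Longrightarrow> fin_span \<phi> m \<subseteq> fin_span \<phi> m'"
  using fin_span_mono[OF phi_step] by blast

lemma phi_bdd: "bounded {x. \<phi> x \<noteq> 0}" using good_phi unfolding good_def by blast

lemma coef:
  assumes "finite S" "S \<subseteq> Lam m" "h = (\<lambda>y. \<Sum>x\<in>S. c x * scl \<phi> m x y)" "y \<in> Lam m"
  shows "L2ip (scl \<phi> m y) h = (if y \<in> S then c y else 0)"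
proof -
  have "L2ip (scl \<phi> m y) h = L2ip h (scl \<phi> m y)" by (rule L2ip_comm)
  also have "\<dots> = (\<Sum>x\<in>S. c x * L2ip (scl \<phi> m x) (scl \<phi> m y))"
    unfolding assms(3) by (rule L2ip_sum_left[OF assms(1) gphi gphi])
  also have "\<dots> = (\<Sum>x\<in>S. if x = y then c x else 0)"
    by (rule sum.cong) (use assms(2,4) ON in auto)
  also have "\<dots> = (if y \<in> S then c y else 0)" using assms(1) by (simp add: sum.delta')
  finally show ?thesis .
qed

lemma parseval_zero:
  assumes "h \<in> fin_span \<phi> m" "L2ip h h = 0" "y \<in> Lam m"
  shows "L2ip (scl \<phi> m y) h = 0"
proof -
  obtain S c where S: "finite S" "S \<subseteq> Lam m" "h = (\<lambda>y. \<Sum>x\<in>S. c x * scl \<phi> m x y)"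
    using assms(1) unfolding fin_span_iff by blast
  have "L2ip h h = (\<Sum>x\<in>S. c x * L2ip (scl \<phi> m x) h)"
    using L2ip_sum_left[OF S(1) gphi fs_good[OF assms(1)], of c] S(3) by simp
  also have "\<dots> = (\<Sum>x\<in>S. c x * c x)"
    by (rule sum.cong) (use coef[OF S] S(2) in auto)
  finally have "(\<Sum>x\<in>S. c x * c x) = 0" using assms(2) by simp
  then have "\<forall>x\<in>S. c x * c x = 0" using S(1) by (subst (asm) sum_nonneg_eq_0_iff) auto
  then show ?thesis using coef[OF S assms(3)] by auto
qed

lemma fin_supp:
  assumes "h \<in> fin_span \<phi> m"
  shows "finite {y \<in> Lam m. L2ip (scl \<phi> m y) h \<noteq> 0}"
proof -
  obtain S c where S: "finite S" "S \<subseteq> Lam m" "h = (\<lambda>y. \<Sum>x\<in>S. c x * scl \<phi> m x y)"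
    using assms(1) unfolding fin_span_iff by blast
  have "{y \<in> Lam m. L2ip (scl \<phi> m y) h \<noteq> 0} \<subseteq> S" using coef[OF S] by (auto split: if_splits)
  then show ?thesis using S(1) finite_subset by blast
qed

lemma coef_infsum:
  assumes "h \<in> fin_span \<phi> m" "good g"
  shows "(\<Sum>\<^sub>\<infinity>y\<in>Lam m. L2ip (scl \<phi> m y) h * L2ip (scl \<phi> m y) g) = L2ip h g"
proof -
  obtain S c where S: "finite S" "S \<subseteq> Lam m" "h = (\<lambda>y. \<Sum>x\<in>S. c x * scl \<phi> m x y)"
    using assms(1) unfolding fin_span_iff by blast
  have "(\<Sum>\<^sub>\<infinity>y\<in>Lam m. L2ip (scl \<phi> m y) h * L2ip (scl \<phi> m y) g)
      = (\<Sum>y\<in>S. L2ip (scl \<phi> m y) h * L2ip (scl \<phi> m y) g)"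
    by (rule infsum_fin(2)[OF S(1,2)]) (use coef[OF S] in auto)
  also have "\<dots> = (\<Sum>y\<in>S. c y * L2ip (scl \<phi> m y) g)"
    by (rule sum.cong) (use coef[OF S] S(2) in auto)
  also have "\<dots> = L2ip h g"
    unfolding S(3) by (rule L2ip_sum_left[OF S(1) gphi assms(2), symmetric])
  finally show ?thesis .
qed

lemma perp_fs:
  assumes "good h2" "\<And>x. x \<in> Lam k \<Longrightarrow> L2ip h2 (scl \<phi> k x) = 0" "u \<in> fin_span \<phi> k"
  shows "L2ip h2 u = 0"
proof -
  obtain S c where S: "finite S" "S \<subseteq> Lam k" "u = (\<lambda>y. \<Sum>x\<in>S. c x * scl \<phi> k x y)"
    using assms(3) unfolding fin_span_iff by blast
  have "L2ip h2 u = L2ip u h2" by (rule L2ip_comm)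
  also have "\<dots> = (\<Sum>x\<in>S. c x * L2ip (scl \<phi> k x) h2)"
    unfolding S(3) by (rule L2ip_sum_left[OF S(1) gphi assms(1)])
  also have "\<dots> = 0" using assms(2) S(2) by (auto simp: L2ip_comm intro!: sum.neutral)
  finally show ?thesis .
qed

lemma perp_Vsp:
  assumes "good h2" "\<And>x. x \<in> Lam k \<Longrightarrow> L2ip h2 (scl \<phi> k x) = 0" "g \<in> Vsp \<phi> k"
  shows "L2ip h2 g = 0"
proof -
  obtain gs where gs: "\<And>j. gs j \<in> fin_span \<phi> k" "(\<lambda>j. \<integral>y. (g y - gs j y)\<^sup>2 \<partial>lborel) \<longlonglongrightarrow> 0"
    and g: "sq_int g"
    using assms(3) unfolding Vsp_def by blast
  show ?thesis
    by (rule perp_limit[OF good_sq_int[OF assms(1)] g _ _ gs(2)])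
       (use gs(1) fs_good good_sq_int perp_fs[OF assms(1,2)] in auto)
qed

lemma decomp_step:
  assumes "\<forall>h. h \<in> fin_span \<phi> k \<longrightarrow> (\<forall>x\<in>Lam n. L2ip h (scl \<phi> n x) = 0) \<longrightarrow>
            (\<forall>m x. n \<le> m \<longrightarrow> m < k \<longrightarrow> x \<in> Lam m \<longrightarrow> L2ip h (scl \<psi> m x) = 0) \<longrightarrow> L2ip h h = 0"
    and nk: "n \<le> k"
    and h: "h \<in> fin_span \<phi> (Suc k)" "\<forall>x\<in>Lam n. L2ip h (scl \<phi> n x) = 0"
      "\<forall>m x. n \<le> m \<longrightarrow> m < Suc k \<longrightarrow> x \<in> Lam m \<longrightarrow> L2ip h (scl \<psi> m x) = 0"
  shows "L2ip h h = 0"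
proof -
  have gh: "good h" using fs_good h(1) by blast
  define A where "A = {x \<in> Lam k. L2ip h (scl \<phi> k x) \<noteq> 0}"
  have Afin: "finite A" unfolding A_def by (rule F3[OF phi_bdd gh])
  have AL: "A \<subseteq> Lam k" unfolding A_def by auto
  define h1 where "h1 = (\<lambda>t. \<Sum>x\<in>A. L2ip h (scl \<phi> k x) * scl \<phi> k x t)"
  define h2 where "h2 = (\<lambda>t. h t - h1 t)"
  have h1fs: "h1 \<in> fin_span \<phi> k" unfolding h1_def
    by (rule fin_span_sum[OF Afin]) (use AL fin_span_basis in blast)
  have h1fs': "h1 \<in> fin_span \<phi> (Suc k)" using h1fs fs_mono[of k "Suc k"] by auto
  have h2fs: "h2 \<in> fin_span \<phi> (Suc k)" unfolding h2_def by (rule fin_span_diff[OF h(1) h1fs'])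
  have gh1: "good h1" and gh2: "good h2" using fs_good h1fs h2fs by auto
  have h2phi: "L2ip h2 (scl \<phi> k x) = 0" if "x \<in> Lam k" for x
    unfolding h2_def h1_def
    by (rule proj[where A=A and J="Lam k" and u="scl \<phi> k" and h=h and j=x, OF Afin AL gphi ON gh that])
       (auto simp: A_def)
  have h2Vsp: "\<forall>g\<in>Vsp \<phi> k. L2ip h2 g = 0" using perp_Vsp[OF gh2 h2phi] by blast
  have h1V: "h1 \<in> Vsp \<phi> k" by (rule fin_span_Vsp[OF good_phi h1fs])
  have h2psi: "\<forall>x\<in>Lam k. L2ip h2 (scl \<psi> k x) = 0"
  proof
    fix x assume x: "x \<in> Lam k"
    have "L2ip h2 (scl \<psi> k x) = L2ip h (scl \<psi> k x) - L2ip h1 (scl \<psi> k x)"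
      unfolding h2_def by (rule L2ip_diff_left[OF gh gh1 gpsi[OF x]])
    then show "L2ip h2 (scl \<psi> k x) = 0" using h(3) nk x psi_perp[OF x h1V] by auto
  qed
  have h22: "L2ip h2 h2 = 0"
    by (rule psi_complete[OF fin_span_Vsp[OF good_phi h2fs] h2Vsp h2psi])
  have h2fsk: "L2ip h2 u = 0" if "u \<in> fin_span \<phi> k" for u
    by (rule perp_fs[OF gh2 h2phi that])
  have h1eq: "h1 = (\<lambda>t. h t - h2 t)" unfolding h2_def by auto
  have h11: "L2ip h1 h1 = 0"
  proof (rule assms(1)[rule_format, OF h1fs])
    fix x assume x: "x \<in> Lam n"
    have "L2ip h1 (scl \<phi> n x) = L2ip h (scl \<phi> n x) - L2ip h2 (scl \<phi> n x)"
      unfolding h1eq by (rule L2ip_diff_left[OF gh gh2 gphi])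
    moreover have "scl \<phi> n x \<in> fin_span \<phi> k" using fs_mono[OF nk] fin_span_basis[OF x] by auto
    ultimately show "L2ip h1 (scl \<phi> n x) = 0" using h(2) x h2fsk by auto
  next
    fix m x assume m: "n \<le> m" "m < k" "x \<in> Lam m"
    have "L2ip h1 (scl \<psi> m x) = L2ip h (scl \<psi> m x) - L2ip h2 (scl \<psi> m x)"
      unfolding h1eq by (rule L2ip_diff_left[OF gh gh2 gpsi[OF m(3)]])
    moreover have "scl \<psi> m x \<in> fin_span \<phi> k" using fs_mono[of "Suc m" k] m psi_fs[OF m(3)] by auto
    ultimately show "L2ip h1 (scl \<psi> m x) = 0" using h(3) m h2fsk by auto
  qed
  have heq: "h = (\<lambda>t. h1 t + h2 t)" unfolding h2_def by auto
  have hsub: "L2ip h g = L2ip (\<lambda>t. h1 t + h2 t) g" for g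
    using heq by (rule arg_cong[where f="\<lambda>f. L2ip f g"])
  have e1: "L2ip h h1 = L2ip h1 h1 + L2ip h2 h1"
    unfolding hsub by (rule L2ip_add_left[OF gh1 gh2 gh1])
  have e2: "L2ip h h2 = L2ip h1 h2 + L2ip h2 h2"
    unfolding hsub by (rule L2ip_add_left[OF gh1 gh2 gh2])
  have e3: "L2ip h h = L2ip h1 h + L2ip h2 h"
    unfolding hsub[of h] by (rule L2ip_add_left[OF gh1 gh2 gh])
  have c1: "L2ip h1 h = L2ip h h1" "L2ip h2 h = L2ip h h2" "L2ip h1 h2 = L2ip h2 h1"
    by (rule L2ip_comm)+
  have z: "L2ip h2 h1 = 0" by (rule h2fsk[OF h1fs])
  show ?thesis using e1 e2 e3 c1 z h11 h22 by linarith
qed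

lemma decomp_all:
  "\<forall>h. h \<in> fin_span \<phi> (n + d) \<longrightarrow> (\<forall>x\<in>Lam n. L2ip h (scl \<phi> n x) = 0) \<longrightarrow>
     (\<forall>m x. n \<le> m \<longrightarrow> m < n + d \<longrightarrow> x \<in> Lam m \<longrightarrow> L2ip h (scl \<psi> m x) = 0) \<longrightarrow> L2ip h h = 0"
proof (induction d)
  case 0
  show ?case
  proof (intro allI impI)
    fix h assume h: "h \<in> fin_span \<phi> (n + 0)" "\<forall>x\<in>Lam n. L2ip h (scl \<phi> n x) = 0"
    then have "h \<in> fin_span \<phi> n" by simp
    then show "L2ip h h = 0" using perp_fs[of h n h] fs_good h(2) by blast
  qed
next
  case (Suc d)
  show ?case
  proof (intro allI impI)
    fix h assume "h \<in> fin_span \<phi> (n + Suc d)" "\<forall>x\<in>Lam n. L2ip h (scl \<phi> n x) = 0"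
      "\<forall>m x. n \<le> m \<longrightarrow> m < n + Suc d \<longrightarrow> x \<in> Lam m \<longrightarrow> L2ip h (scl \<psi> m x) = 0"
    then show "L2ip h h = 0" using decomp_step[OF Suc.IH, where h=h] by simp
  qed
qed

end



context wav begin

lemma cross_phi_psi:
  assumes "n \<le> m" "x \<in> Lam n" "x' \<in> Lam m"
  shows "L2ip (scl \<phi> n x) (scl \<psi> m x') = 0"
proof -
  have "scl \<phi> n x \<in> fin_span \<phi> m" using fs_mono[OF assms(1)] fin_span_basis[OF assms(2)] by auto
  then show ?thesis using psi_perp[OF assms(3) fin_span_Vsp[OF good_phi]] by blast
qed

lemma cross_psi_psi:
  assumes "m < m'" "x \<in> Lam m" "x' \<in> Lam m'"
  shows "L2ip (scl \<psi> m x) (scl \<psi> m' x') = 0"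
proof -
  have "scl \<psi> m x \<in> fin_span \<phi> m'" using fs_mono[of "Suc m" m'] assms(1) psi_fs[OF assms(2)] by auto
  then show ?thesis using psi_perp[OF assms(3) fin_span_Vsp[OF good_phi]] by blast
qed

lemma main:
  assumes nN: "n < N"
  shows "is_ONB_l2 N
           ({Inl x | x. x \<in> Lam n} \<union> {Inr (m, x) | m x. n \<le> m \<and> m < N \<and> x \<in> Lam m})
           (\<lambda>i. case i of Inl x \<Rightarrow> coarse \<phi> \<phi> N n x
                         | Inr (m, x) \<Rightarrow> coarse \<phi> \<psi> N m x)"
proof -
  define I where "I = ({Inl x | x. x \<in> Lam n} \<union> {Inr (m, x) | m x. n \<le> m \<and> m < N \<and> x \<in> Lam m})"
  define G where "G = (\<lambda>i. case i of Inl x \<Rightarrow> scl \<phi> n x | Inr (m, x) \<Rightarrow> scl \<psi> m x)"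
  define cc where "cc = (2::real) powr (real N / 2)"
  have fam: "(\<lambda>i. case i of Inl x \<Rightarrow> coarse \<phi> \<phi> N n x | Inr (m, x) \<Rightarrow> coarse \<phi> \<psi> N m x)
      = (\<lambda>i y. cc * L2ip (scl \<phi> N y) (G i))"
    by (auto simp: fun_eq_iff coarse_def G_def cc_def split: sum.split)
  have Icases: "P" if "i \<in> I" "\<And>x. i = Inl x \<Longrightarrow> x \<in> Lam n \<Longrightarrow> P"
    "\<And>m x. i = Inr (m, x) \<Longrightarrow> n \<le> m \<Longrightarrow> m < N \<Longrightarrow> x \<in> Lam m \<Longrightarrow> P" for i P
    using that unfolding I_def by blast
  have GL: "G (Inl x) = scl \<phi> n x" for x by (simp add: G_def)
  have GR: "G (Inr (m, x)) = scl \<psi> m x" for m x by (simp add: G_def)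
  have IL: "Inl x \<in> I" if "x \<in> Lam n" for x using that unfolding I_def by blast
  have IR: "Inr (m, x) \<in> I" if "n \<le> m" "m < N" "x \<in> Lam m" for m x using that unfolding I_def by blast
  have Ifs: "G i \<in> fin_span \<phi> N" if "i \<in> I" for i
  proof (rule Icases[OF that])
    fix x assume "i = Inl x" "x \<in> Lam n"
    then show "G i \<in> fin_span \<phi> N" using GL fs_mono[of n N] nN fin_span_basis by auto
  next
    fix m x assume "i = Inr (m, x)" "n \<le> m" "m < N" "x \<in> Lam m"
    then show "G i \<in> fin_span \<phi> N" using GR fs_mono[of "Suc m" N] psi_fs by auto
  qed
  have Igood: "good (G i)" if "i \<in> I" for i using fs_good Ifs that by blast
  have ION: "L2ip (G i) (G j) = (if i = j then 1 else 0)" if "i \<in> I" "j \<in> I" for i j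
  proof (rule Icases[OF that(1)])
    fix x assume i: "i = Inl x" "x \<in> Lam n"
    show ?thesis
    proof (rule Icases[OF that(2)])
      fix x' assume j: "j = Inl x'" "x' \<in> Lam n"
      then show ?thesis using i ON GL by auto
    next
      fix m x' assume j: "j = Inr (m, x')" "n \<le> m" "m < N" "x' \<in> Lam m"
      then show ?thesis using i GL GR cross_phi_psi by auto
    qed
  next
    fix m x assume i: "i = Inr (m, x)" "n \<le> m" "m < N" "x \<in> Lam m"
    show ?thesis
    proof (rule Icases[OF that(2)])
      fix x' assume j: "j = Inl x'" "x' \<in> Lam n"
      have "L2ip (G i) (G j) = L2ip (G j) (G i)" by (rule L2ip_comm)
      also have "\<dots> = 0" using cross_phi_psi[OF i(2) j(2) i(4)] i(1) j(1) GL GR by simp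
      finally show ?thesis using i(1) j(1) by simp
    next
      fix m' x' assume j: "j = Inr (m', x')" "n \<le> m'" "m' < N" "x' \<in> Lam m'"
      consider "m = m'" | "m < m'" | "m' < m" by linarith
      then show ?thesis
      proof cases
        case 1 then show ?thesis using i j GR psi_orthonormal by auto
      next
        case 2 then show ?thesis using i j GR cross_psi_psi by auto
      next
        case 3
        have "L2ip (G i) (G j) = L2ip (G j) (G i)" by (rule L2ip_comm)
        also have "\<dots> = 0" using cross_psi_psi[OF 3 j(4) i(4)] i(1) j(1) GR by simp
        finally show ?thesis using i(1) j(1) 3 by simp
      qed
    qed
  qed
  have supp_fin: "finite {y \<in> Lam N. L2ip (scl \<phi> N y) (G i) \<noteq> 0}" if "i \<in> I" for i
    by (rule fin_supp[OF Ifs[OF that]])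
  have cc_sq: "cc * cc = 2 ^ N"
    unfolding cc_def by (simp add: powr_add[symmetric] powr_realpow)
  have cc_pos: "cc > 0" unfolding cc_def by simp
  have "is_ONB_l2 N I (\<lambda>i y. cc * L2ip (scl \<phi> N y) (G i))"
    unfolding is_ONB_l2_def
  proof (intro conjI ballI allI impI)
    fix i assume i: "i \<in> I"
    show "in_l2 N (\<lambda>y. cc * L2ip (scl \<phi> N y) (G i))"
      unfolding in_l2_def
      by (rule infsum_fin(1)[OF supp_fin[OF i]]) auto
  next
    fix i j assume i: "i \<in> I" and j: "j \<in> I"
    have "ip_eps N (\<lambda>y. cc * L2ip (scl \<phi> N y) (G i)) (\<lambda>y. cc * L2ip (scl \<phi> N y) (G j))
        = (1 / 2 ^ N) * (\<Sum>\<^sub>\<infinity>y\<in>Lam N. (cc * cc) * (L2ip (scl \<phi> N y) (G i) * L2ip (scl \<phi> N y) (G j)))"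
      unfolding ip_eps_def by (simp add: mult_ac)
    also have "\<dots> = (1 / 2 ^ N) * ((cc * cc) * (\<Sum>\<^sub>\<infinity>y\<in>Lam N. L2ip (scl \<phi> N y) (G i) * L2ip (scl \<phi> N y) (G j)))"
      by (simp only: infsum_cmult_right')
    also have "(\<Sum>\<^sub>\<infinity>y\<in>Lam N. L2ip (scl \<phi> N y) (G i) * L2ip (scl \<phi> N y) (G j)) = L2ip (G i) (G j)"
      by (rule coef_infsum[OF Ifs[OF i] Igood[OF j]])
    finally show "ip_eps N (\<lambda>y. cc * L2ip (scl \<phi> N y) (G i)) (\<lambda>y. cc * L2ip (scl \<phi> N y) (G j))
        = (if i = j then 1 else 0)"
      using ION[OF i j] cc_sq by simp
  next
    fix f assume f: "in_l2 N f \<and> (\<forall>i\<in>I. ip_eps N f (\<lambda>y. cc * L2ip (scl \<phi> N y) (G i)) = 0)"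
    fix y0 assume y0: "y0 \<in> Lam N"
    define a where "a = (\<lambda>i y. L2ip (scl \<phi> N y) (G i))"
    have orth: "(\<Sum>\<^sub>\<infinity>y\<in>Lam N. f y * a i y) = 0" if "i \<in> I" for i
    proof -
      have "0 = ip_eps N f (\<lambda>y. cc * L2ip (scl \<phi> N y) (G i))" using f that by simp
      also have "\<dots> = (1 / 2 ^ N) * (\<Sum>\<^sub>\<infinity>y\<in>Lam N. cc * (f y * a i y))"
        unfolding ip_eps_def a_def by (simp add: mult_ac)
      also have "\<dots> = (1 / 2 ^ N) * (cc * (\<Sum>\<^sub>\<infinity>y\<in>Lam N. f y * a i y))"
        by (simp only: infsum_cmult_right')
      finally show ?thesis using cc_pos by simp
    qed
    define I0 where "I0 = {i \<in> I. a i y0 \<noteq> 0}"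
    have I0I: "I0 \<subseteq> I" unfolding I0_def by auto
    have I0fin: "finite I0"
    proof -
      have "I0 \<subseteq> Inl ` {x \<in> Lam n. L2ip (scl \<phi> N y0) (scl \<phi> n x) \<noteq> 0} \<union>
          (\<Union>m\<in>{n..<N}. (\<lambda>x. Inr (m, x)) ` {x \<in> Lam m. L2ip (scl \<phi> N y0) (scl \<psi> m x) \<noteq> 0})"
      proof
        fix i assume i: "i \<in> I0"
        then have iI: "i \<in> I" and ai: "a i y0 \<noteq> 0" unfolding I0_def by auto
        show "i \<in> Inl ` {x \<in> Lam n. L2ip (scl \<phi> N y0) (scl \<phi> n x) \<noteq> 0} \<union>
          (\<Union>m\<in>{n..<N}. (\<lambda>x. Inr (m, x)) ` {x \<in> Lam m. L2ip (scl \<phi> N y0) (scl \<psi> m x) \<noteq> 0})"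
        proof (rule Icases[OF iI])
          fix x assume "i = Inl x" "x \<in> Lam n"
          then show ?thesis using ai GL unfolding a_def by auto
        next
          fix m x assume "i = Inr (m, x)" "n \<le> m" "m < N" "x \<in> Lam m"
          then show ?thesis using ai GR unfolding a_def by auto
        qed
      qed
      moreover have "finite (Inl ` {x \<in> Lam n. L2ip (scl \<phi> N y0) (scl \<phi> n x) \<noteq> 0} \<union>
          (\<Union>m\<in>{n..<N}. (\<lambda>x. Inr (m, x)) ` {x \<in> Lam m. L2ip (scl \<phi> N y0) (scl \<psi> m x) \<noteq> 0}))"
        using F3[OF phi_bdd gphi] F3[OF psi_supp gphi] by auto
      ultimately show ?thesis using finite_subset by blast
    qed
    define hres where "hres = (\<lambda>t. scl \<phi> N y0 t - (\<Sum>i\<in>I0. L2ip (scl \<phi> N y0) (G i) * G i t))"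
    have hres_fs: "hres \<in> fin_span \<phi> N" unfolding hres_def
      by (rule fin_span_diff[OF fin_span_basis[OF y0] fin_span_sum[OF I0fin]]) (use Ifs I0I in blast)
    have hres_perp: "L2ip hres (G j) = 0" if "j \<in> I" for j
      unfolding hres_def
      by (rule proj[where A=I0 and J=I and u=G and h="scl \<phi> N y0" and j=j, OF I0fin I0I Igood ION gphi that])
         (auto simp: I0_def a_def)
    have "L2ip hres hres = 0"
    proof (rule decomp_all[of n "N - n", rule_format])
      show "hres \<in> fin_span \<phi> (n + (N - n))" using hres_fs nN by simp
    next
      fix x assume "x \<in> Lam n"
      then show "L2ip hres (scl \<phi> n x) = 0" using hres_perp[OF IL] GL by metis
    next
      fix m x assume "n \<le> m" "m < n + (N - n)" "x \<in> Lam m"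
      then show "L2ip hres (scl \<psi> m x) = 0" using hres_perp[OF IR, of m x] GR nN by simp
    qed
    then have hz: "L2ip (scl \<phi> N y) hres = 0" if "y \<in> Lam N" for y
      using parseval_zero[OF hres_fs _ that] by blast
    have gI0: "\<And>i. i \<in> I0 \<Longrightarrow> good (G i)" using Igood I0I by blast
    have recon: "(if y = y0 then 1 else 0) = (\<Sum>i\<in>I0. a i y0 * a i y)" if y: "y \<in> Lam N" for y
    proof -
      have "0 = L2ip hres (scl \<phi> N y)" using hz[OF y] L2ip_comm by metis
      also have "\<dots> = L2ip (scl \<phi> N y0) (scl \<phi> N y) - L2ip (\<lambda>t. \<Sum>i\<in>I0. L2ip (scl \<phi> N y0) (G i) * G i t) (scl \<phi> N y)"
        unfolding hres_def by (rule L2ip_diff_left[OF gphi good_sum[OF I0fin gI0] gphi])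
      also have "L2ip (\<lambda>t. \<Sum>i\<in>I0. L2ip (scl \<phi> N y0) (G i) * G i t) (scl \<phi> N y)
          = (\<Sum>i\<in>I0. L2ip (scl \<phi> N y0) (G i) * L2ip (G i) (scl \<phi> N y))"
        by (rule L2ip_sum_left[OF I0fin gI0 gphi])
      also have "\<dots> = (\<Sum>i\<in>I0. a i y0 * a i y)" unfolding a_def by (simp add: L2ip_comm)
      finally show ?thesis using ON[OF y0 y] by auto
    qed
    define T where "T = insert y0 (\<Union>i\<in>I0. {y \<in> Lam N. a i y \<noteq> 0})"
    have Tfin: "finite T" unfolding T_def a_def using I0fin supp_fin I0I by auto
    have TL: "T \<subseteq> Lam N" unfolding T_def using y0 by auto
    have sumT: "(\<Sum>\<^sub>\<infinity>y\<in>Lam N. f y * a i y) = (\<Sum>y\<in>T. f y * a i y)" if "i \<in> I0" for i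
      by (rule infsum_fin(2)[OF Tfin TL]) (use that in \<open>auto simp: T_def\<close>)
    have "f y0 = (\<Sum>y\<in>T. if y = y0 then f y else 0)"
      using Tfin by (simp add: sum.delta' T_def)
    also have "\<dots> = (\<Sum>y\<in>T. f y * (\<Sum>i\<in>I0. a i y0 * a i y))"
    proof (rule sum.cong)
      fix y assume "y \<in> T"
      then have yL: "y \<in> Lam N" using TL by auto
      show "(if y = y0 then f y else 0) = f y * (\<Sum>i\<in>I0. a i y0 * a i y)"
        unfolding recon[OF yL, symmetric] by simp
    qed simp
    also have "\<dots> = (\<Sum>y\<in>T. \<Sum>i\<in>I0. a i y0 * (f y * a i y))"
      by (simp add: sum_distrib_left mult_ac)
    also have "\<dots> = (\<Sum>i\<in>I0. \<Sum>y\<in>T. a i y0 * (f y * a i y))"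
      by (rule sum.swap)
    also have "\<dots> = (\<Sum>i\<in>I0. a i y0 * (\<Sum>y\<in>T. f y * a i y))"
      by (simp add: sum_distrib_left)
    also have "\<dots> = 0"
    proof (rule sum.neutral, rule ballI)
      fix i assume i: "i \<in> I0"
      have "(\<Sum>y\<in>T. f y * a i y) = 0" using sumT[OF i] orth[of i] i I0I by auto
      then show "a i y0 * (\<Sum>y\<in>T. f y * a i y) = 0" by simp
    qed
    finally show "f y0 = 0" .
  qed
  then show ?thesis unfolding fam I_def .
qed

end


theorem proposition4p9:
  fixes \<phi> \<psi> :: "real \<Rightarrow> real" and r :: real and K :: "real set"
    and a b :: "real \<Rightarrow> real" and N n :: nat
  assumes r_pos: "r > 0"
    and phi_Cr: "Cr r \<phi>" and phi_supp: "bounded {x. \<phi> x \<noteq> 0}"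
    and phi_int: "(\<integral>x. \<phi> x \<partial>lborel) = 1"
    and phi_orth: "\<And>k::int. (\<integral>x. \<phi> x * \<phi> (x + of_int k) \<partial>lborel) = (if k = 0 then 1 else 0)"
    and K_fin: "finite K" and K_sub: "K \<subseteq> Lam 1"
    and refine: "\<And>m x. x \<in> Lam m \<Longrightarrow>
        scl \<phi> m x = (\<lambda>y. \<Sum>k\<in>K. a k * scl \<phi> (Suc m) (x + k / 2 ^ m) y)"
    and psi_Cr: "Cr r \<psi>" and psi_supp: "bounded {x. \<psi> x \<noteq> 0}"
    and psi_refine: "\<And>m x. x \<in> Lam m \<Longrightarrow>
        scl \<psi> m x = (\<lambda>y. \<Sum>k\<in>K. b k * scl \<phi> (Suc m) (x + k / 2 ^ m) y)"
    and psi_orthonormal: "\<And>m x x'. x \<in> Lam m \<Longrightarrow> x' \<in> Lam m \<Longrightarrow>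
        L2ip (scl \<psi> m x) (scl \<psi> m x') = (if x = x' then 1 else 0)"
    and psi_perp: "\<And>m x f. x \<in> Lam m \<Longrightarrow> f \<in> Vsp \<phi> m \<Longrightarrow> L2ip f (scl \<psi> m x) = 0"
    and psi_complete: "\<And>m f. f \<in> Vsp \<phi> (Suc m) \<Longrightarrow> (\<forall>g\<in>Vsp \<phi> m. L2ip f g = 0) \<Longrightarrow>
        (\<forall>x\<in>Lam m. L2ip f (scl \<psi> m x) = 0) \<Longrightarrow> L2ip f f = 0"
    and n_lt: "n < N"
  shows "is_ONB_l2 N
           ({Inl x | x. x \<in> Lam n} \<union> {Inr (m, x) | m x. n \<le> m \<and> m < N \<and> x \<in> Lam m})
           (\<lambda>i. case i of Inl x \<Rightarrow> coarse \<phi> \<phi> N n x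
                         | Inr (m, x) \<Rightarrow> coarse \<phi> \<psi> N m x)"
  proof -
  have gphi: "good \<phi>" unfolding good_def using Cr_cont[OF r_pos phi_Cr] phi_supp by blast
  have step: "scl \<phi> m x \<in> fin_span \<phi> (Suc m)" if "x \<in> Lam m" for m x
  proof -
    have "(\<lambda>y. \<Sum>k\<in>K. a k * scl \<phi> (Suc m) (x + k / 2 ^ m) y) \<in> fin_span \<phi> (Suc m)"
    proof (rule fin_span_sum[OF K_fin])
      fix k assume "k \<in> K"
      then have "k \<in> Lam 1" using K_sub by auto
      then show "scl \<phi> (Suc m) (x + k / 2 ^ m) \<in> fin_span \<phi> (Suc m)"
        by (intro fin_span_basis Lam_add that)
    qed
    then show ?thesis using refine[OF that] by simp
  qed
  have pstep: "scl \<psi> m x \<in> fin_span \<phi> (Suc m)" if "x \<in> Lam m" for m x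
  proof -
    have "(\<lambda>y. \<Sum>k\<in>K. b k * scl \<phi> (Suc m) (x + k / 2 ^ m) y) \<in> fin_span \<phi> (Suc m)"
    proof (rule fin_span_sum[OF K_fin])
      fix k assume "k \<in> K"
      then have "k \<in> Lam 1" using K_sub by auto
      then show "scl \<phi> (Suc m) (x + k / 2 ^ m) \<in> fin_span \<phi> (Suc m)"
        by (intro fin_span_basis Lam_add that)
    qed
    then show ?thesis using psi_refine[OF that] by simp
  qed
  have W: "wav \<phi> \<psi>"
  proof (rule wav.intro)
    show "good \<phi>" by (rule gphi)
    show "\<And>m x x'. x \<in> Lam m \<Longrightarrow> x' \<in> Lam m \<Longrightarrow>
        L2ip (scl \<phi> m x) (scl \<phi> m x') = (if x = x' then 1 else 0)"
      by (rule ON_lemma[OF phi_orth])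
    show "\<And>m x. x \<in> Lam m \<Longrightarrow> scl \<phi> m x \<in> fin_span \<phi> (Suc m)" by (rule step)
    show "\<And>m x. x \<in> Lam m \<Longrightarrow> scl \<psi> m x \<in> fin_span \<phi> (Suc m)" by (rule pstep)
  qed (fact psi_supp psi_orthonormal psi_perp psi_complete)+
  show ?thesis by (rule wav.main[OF W n_lt])
qed

end
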